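(* Let $A\in\{0,1\}^{n\times n}$ be a decomposable maximal matrix and let $n=\prod_{j=1}^m p_j^{k_j}$ be the prime factorization of $n$ (distinct primes $p_j$, exponents $k_j\ge1$). Let $\mathcal{L}=\{n_1:(n_1,n_2)\text{ is a compatible pair and } A \text{ admits an } (n_1,n_2)\text{ factorization}\}$. For any branch $\mathfrak{l}_0<\dots<\mathfrak{l}_q$ of $\mathcal{L}$, let $(n_1,\dots,n_\ell)=(\mathfrak{l}_0,\mathfrak{l}_1/\mathfrak{l}_0,\dots,\mathfrak{l}_q/\mathfrak{l}_{q-1},n/\mathfrak{l}_q)$ be the sizes of the factorization resulting from the branch. Then: (1) $n_i\in\{p_1,\dots,p_m\}$ for all $i=1,\dots,\ell$; (2) $\ell=\sum_{j=1}^m k_j$; (3) the number of branches of $\mathcal{L}$ is $\dfrac{\ell!}{\prod_{j=1}^m k_j!}$.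
   Context: Kronecker products of binary matrices use Boolean arithmetic ($1+1=1$). An $(n_1,\dots,n_m)$ factorization of $A$ is $A=A_1\otimes\cdots\otimes A_m$ with $A_i\in\{0,1\}^{n_i\times n_i}$, $\prod n_i=n$. A compatible pair for $n$ is $(n_1,n_2)$ with $n_1,n_2$ positive divisors of $n$ different from $1$ and $n$ and $n_1n_2=n$. $A$ is decomposable if it admits an $(n_1,\dots,n_\ell)$ factorization with $\ell>1$ and all $n_i>1$; a decomposable $A$ is maximal if it admits an $(n_1,n_2)$ factorization for every compatible pair $(n_1,n_2)$. For a finite set $\mathcal{X}\subset\mathbb{N}$, $\overline{\mathcal{X}}$ denotes the set of elements of $\mathcal{X}$ that are not multiples of another element of $\mathcal{X}$. A branch of $\mathcal{L}$ is a sequence $\mathfrak{l}_0,\dots,\mathfrak{l}_q$ ($q\ge0$) with $\mathfrak{l}_0\in\overline{\mathcal{L}}$; for $k\ge1$, $\mathfrak{l}_k\in\overline{\mathcal{M}_k}$ where $\mathcal{M}_k$ is the set of elements of $\mathcal{L}$ that are multiples of $\mathfrak{l}_{k-1}$ other than $\mathfrak{l}_{k-1}$; the sequence stops at $\mathfrak{l}_q$ when $\mathcal{L}$ contains no multiple of $\mathfrak{l}_q$ other than itself. *)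

theory Defs
  imports "HOL-Computational_Algebra.Primes"
begin

text \<open>Binary matrices of size k x k are represented as functions nat => nat => bool;
  only entries with both indices < k are meaningful. Entry True means 1.\<close>

type_synonym bmat = "nat \<Rightarrow> nat \<Rightarrow> bool"

definition mat_eq :: "nat \<Rightarrow> bmat \<Rightarrow> bmat \<Rightarrow> bool" where
  "mat_eq n A B \<longleftrightarrow> (\<forall>i<n. \<forall>j<n. A i j = B i j)"

definition bkron :: "nat \<Rightarrow> bmat \<Rightarrow> bmat \<Rightarrow> bmat" where
  "bkron m B C = (\<lambda>i j. B (i div m) (j div m) \<and> C (i mod m) (j mod m))"

text \<open>Kronecker product of a list of (size, matrix) pairs; the empty product is the 1x1 matrix [1].\<close>
fun bkron_list :: "(nat \<times> bmat) list \<Rightarrow> bmat" where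
  "bkron_list [] = (\<lambda>i j. True)"
| "bkron_list ((k, B) # rest) = bkron (prod_list (map fst rest)) B (bkron_list rest)"

definition has_factorization :: "nat \<Rightarrow> bmat \<Rightarrow> nat list \<Rightarrow> bool" where
  "has_factorization n A ns \<longleftrightarrow> prod_list ns = n \<and>
     (\<exists>Ms :: bmat list. length Ms = length ns \<and> mat_eq n A (bkron_list (zip ns Ms)))"

definition compatible_pair :: "nat \<Rightarrow> nat \<Rightarrow> nat \<Rightarrow> bool" where
  "compatible_pair n n1 n2 \<longleftrightarrow> n1 dvd n \<and> n2 dvd n \<and> n1 > 0 \<and> n2 > 0 \<and>
     n1 \<noteq> 1 \<and> n1 \<noteq> n \<and> n2 \<noteq> 1 \<and> n2 \<noteq> n \<and> n1 * n2 = n"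

definition decomposable :: "nat \<Rightarrow> bmat \<Rightarrow> bool" where
  "decomposable n A \<longleftrightarrow> (\<exists>ns. length ns > 1 \<and> (\<forall>k\<in>set ns. k > 1) \<and> has_factorization n A ns)"

definition maximal :: "nat \<Rightarrow> bmat \<Rightarrow> bool" where
  "maximal n A \<longleftrightarrow> decomposable n A \<and>
     (\<forall>n1 n2. compatible_pair n n1 n2 \<longrightarrow> has_factorization n A [n1, n2])"

definition factor_set :: "nat \<Rightarrow> bmat \<Rightarrow> nat set" where
  "factor_set n A = {n1. \<exists>n2. compatible_pair n n1 n2 \<and> has_factorization n A [n1, n2]}"

definition minimal_elems :: "nat set \<Rightarrow> nat set" where
  "minimal_elems X = {x\<in>X. \<not> (\<exists>y\<in>X. y \<noteq> x \<and> y dvd x)}"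

definition proper_multiples :: "nat set \<Rightarrow> nat \<Rightarrow> nat set" where
  "proper_multiples L l = {x\<in>L. l dvd x \<and> x \<noteq> l}"

definition is_branch :: "nat set \<Rightarrow> nat list \<Rightarrow> bool" where
  "is_branch L ls \<longleftrightarrow> ls \<noteq> [] \<and> hd ls \<in> minimal_elems L \<and>
     (\<forall>k. 0 < k \<and> k < length ls \<longrightarrow> ls ! k \<in> minimal_elems (proper_multiples L (ls ! (k - 1)))) \<and>
     proper_multiples L (last ls) = {}"

definition branch_sizes :: "nat \<Rightarrow> nat list \<Rightarrow> nat list" where
  "branch_sizes n ls = hd ls # map (\<lambda>k. ls ! (k + 1) div ls ! k) [0..<length ls - 1] @ [n div last ls]"

end

theory Submission imports Defs "HOL-Combinatorics.Multiset_Permutations" begin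

definition LL :: "nat \<Rightarrow> nat set" where "LL n = {d. d dvd n \<and> 1 < d \<and> d < n}"

lemma lp_ne_l: "0 < (l::nat) \<Longrightarrow> prime p \<Longrightarrow> l*p \<noteq> l"
proof
  assume "0 < l" "prime p" "l*p = l"
  then have "p = 1" by simp
  then show False using \<open>prime p\<close> by simp
qed

lemma min_mult:
  assumes "0 < l" "0 < n"
  shows "x \<in> minimal_elems {x\<in>LL n. l dvd x \<and> x \<noteq> l} \<longleftrightarrow> (\<exists>p. prime p \<and> x = l*p \<and> x \<in> LL n)"
proof
  assume x: "x \<in> minimal_elems {x\<in>LL n. l dvd x \<and> x \<noteq> l}"
  then have xL: "x \<in> LL n" "l dvd x" "x \<noteq> l" and mn: "\<And>y. y \<in> LL n \<Longrightarrow> l dvd y \<Longrightarrow> y \<noteq> l \<Longrightarrow> y \<noteq> x \<Longrightarrow> \<not> y dvd x"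
    unfolding minimal_elems_def by auto
  obtain m where xm: "x = l*m" using xL by (auto elim: dvdE)
  have "m \<noteq> 1" using xm xL by auto
  moreover have "m \<noteq> 0" using xm xL by (auto simp: LL_def)
  ultimately have m1: "m > 1" by auto
  have "prime m"
  proof (rule ccontr)
    assume np: "\<not> prime m"
    obtain p where p: "prime p" "p dvd m" using m1 prime_factor_nat[of m] by auto
    have pm: "p \<noteq> m" using p np by auto
    have pm': "p \<le> m" using p m1 by (simp add: dvd_imp_le)
    have "l*p dvd x" using p xm by auto
    moreover have "l*p \<in> LL n"
    proof -
      have "l*p dvd n" using \<open>l*p dvd x\<close> xL(1) unfolding LL_def using dvd_trans by blast
      moreover have "1 < l*p"
      proof -
        have "p \<le> l*p" using assms by simp
        moreover have "1 < p" using p prime_gt_1_nat by blast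
        ultimately show ?thesis by linarith
      qed
      moreover have "l*p < n"
      proof -
        have "l*p \<le> l*m" using pm' by (rule mult_le_mono2)
        moreover have "l*m < n" using xL(1) xm unfolding LL_def by simp
        ultimately show ?thesis by linarith
      qed
      ultimately show ?thesis unfolding LL_def by auto
    qed
    moreover have "l*p \<noteq> l" using lp_ne_l[OF assms(1) p(1)] by simp
    moreover have "l*p \<noteq> x" using xm pm assms by auto
    ultimately show False using mn[of "l*p"] by auto
  qed
  then show "\<exists>p. prime p \<and> x = l*p \<and> x \<in> LL n" using xm xL by auto
next
  assume "\<exists>p. prime p \<and> x = l*p \<and> x \<in> LL n"
  then obtain p where p: "prime p" "x = l*p" "x \<in> LL n" by auto
  have xl: "x \<noteq> l" using lp_ne_l[OF assms(1) p(1)] p(2) by simp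
  have "\<not> (\<exists>y\<in>{x\<in>LL n. l dvd x \<and> x \<noteq> l}. y \<noteq> x \<and> y dvd x)"
  proof
    assume "\<exists>y\<in>{x\<in>LL n. l dvd x \<and> x \<noteq> l}. y \<noteq> x \<and> y dvd x"
    then obtain y where y: "l dvd y" "y \<noteq> l" "y \<noteq> x" "y dvd x" by blast
    obtain m where ym: "y = l*m" using y by (auto elim: dvdE)
    have "m dvd p" using y(4) ym p(2) assms by (simp add: nat_mult_dvd_cancel1)
    then have "m = 1 \<or> m = p" using p(1) unfolding prime_nat_iff by blast
    then show False using y ym p(2) by (metis mult.right_neutral)
  qed
  moreover have "x \<in> {x\<in>LL n. l dvd x \<and> x \<noteq> l}" using p xl by simp
  ultimately show "x \<in> minimal_elems {x\<in>LL n. l dvd x \<and> x \<noteq> l}"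
    unfolding minimal_elems_def by blast
qed


lemma last_empty:
  assumes "l \<in> LL n"
  shows "proper_multiples (LL n) l = {} \<longleftrightarrow> prime (n div l)"
proof -
  obtain q where q: "n = l*q" using assms unfolding LL_def by (auto elim: dvdE)
  have l0: "l > 0" using assms by (auto simp: LL_def)
  have qd: "n div l = q" using q l0 by simp
  have q1: "q > 1"
  proof -
    have "q \<noteq> 0" using q assms by (auto simp: LL_def)
    moreover have "q \<noteq> 1" using q assms by (auto simp: LL_def)
    ultimately show ?thesis by linarith
  qed
  show ?thesis
  proof
    assume e: "proper_multiples (LL n) l = {}"
    show "prime (n div l)"
    proof (rule ccontr)
      assume np: "\<not> prime (n div l)"
      obtain p where p: "prime p" "p dvd q" using q1 prime_factor_nat[of q] by auto
      have "p \<noteq> q" using p np qd by auto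
      moreover have "p \<le> q" using p q1 by (simp add: dvd_imp_le)
      ultimately have pq: "p < q" by linarith
      have p1: "1 < p" using p(1) prime_gt_1_nat by blast
      have "l*p dvd n" using p(2) q by auto
      moreover have "1 < l*p"
      proof -
        have "p \<le> l*p" using l0 by simp
        then show ?thesis using p1 by linarith
      qed
      moreover have "l*p < n" using l0 pq q by simp
      moreover have "l*p \<noteq> l" using lp_ne_l[OF l0 p(1)] by simp
      ultimately have "l*p \<in> proper_multiples (LL n) l" unfolding proper_multiples_def LL_def by simp
      then show False using e by simp
    qed
  next
    assume pr: "prime (n div l)"
    show "proper_multiples (LL n) l = {}"
    proof (rule ccontr)
      assume "proper_multiples (LL n) l \<noteq> {}"
      then obtain x where x: "x \<in> LL n" "l dvd x" "x \<noteq> l" unfolding proper_multiples_def by blast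
      obtain m where xm: "x = l*m" using x(2) by (auto elim: dvdE)
      have "m dvd q" using x(1) xm q l0 unfolding LL_def by auto
      then have "m = 1 \<or> m = q" using pr qd unfolding prime_nat_iff by blast
      moreover have "m \<noteq> 1" using x(3) xm by auto
      moreover have "m \<noteq> q" using x(1) xm q unfolding LL_def by auto
      ultimately show False by blast
    qed
  qed
qed

definition pp :: "nat list \<Rightarrow> nat list" where
  "pp ps = map (\<lambda>k. prod_list (take k ps)) [1..<length ps]"

lemma bs_length: "ls \<noteq> [] \<Longrightarrow> length (branch_sizes n ls) = Suc (length ls)"
  by (simp add: branch_sizes_def)

lemma bs_nth:
  assumes "ls \<noteq> []" "i \<le> length ls"
  shows "branch_sizes n ls ! i = (if i = 0 then ls!0 else if i < length ls then ls!i div ls!(i-1) else n div last ls)"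
  using assms by (auto simp: branch_sizes_def nth_append hd_conv_nth nth_Cons split: nat.split)

lemma bs_prefix:
  assumes ne: "ls \<noteq> []" and st: "\<And>k. 0 < k \<Longrightarrow> k < length ls \<Longrightarrow> ls!(k-1) dvd ls!k"
  shows "k < length ls \<Longrightarrow> prod_list (take (Suc k) (branch_sizes n ls)) = ls!k"
proof (induction k)
  case 0
  have "branch_sizes n ls \<noteq> []" by (simp add: branch_sizes_def)
  then have "take (Suc 0) (branch_sizes n ls) = [branch_sizes n ls ! 0]"
    by (cases "branch_sizes n ls") auto
  then show ?case using bs_nth[OF ne, of 0 n] by simp
next
  case (Suc k)
  have "Suc k < length (branch_sizes n ls)" using Suc.prems bs_length[OF ne, of n] by simp
  then have "take (Suc (Suc k)) (branch_sizes n ls) = take (Suc k) (branch_sizes n ls) @ [branch_sizes n ls ! Suc k]"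
    by (simp add: take_Suc_conv_app_nth)
  then have "prod_list (take (Suc (Suc k)) (branch_sizes n ls)) = ls!k * (ls!(Suc k) div ls!k)"
    using Suc bs_nth[OF ne, of "Suc k" n] by simp
  also have "\<dots> = ls!(Suc k)" using st[of "Suc k"] Suc.prems by simp
  finally show ?case .
qed

lemma prod_gt1: "(\<forall>k\<in>set xs. (1::nat) < k) \<Longrightarrow> 1 \<le> prod_list xs \<and> (xs \<noteq> [] \<longrightarrow> 1 < prod_list xs)"
proof (induction xs)
  case Nil
  then show ?case by simp
next
  case (Cons a xs)
  then have a: "1 < a" and p: "1 \<le> prod_list xs" by auto
  have "a \<le> a * prod_list xs" using p by simp
  then have "1 < a * prod_list xs" using a by linarith
  then show ?case by (simp del: One_nat_def)
qed


lemma LL_min: "minimal_elems (LL n) = minimal_elems {x\<in>LL n. 1 dvd x \<and> x \<noteq> 1}"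
proof -
  have "{x\<in>LL n. 1 dvd x \<and> x \<noteq> 1} = LL n" by (auto simp: LL_def)
  then show ?thesis by simp
qed

lemma minimal_sub: "x \<in> minimal_elems X \<Longrightarrow> x \<in> X"
  by (simp add: minimal_elems_def)

lemma branch_a:
  assumes n0: "0 < n" and br: "is_branch (LL n) ls"
  shows "mset (branch_sizes n ls) = prime_factorization n \<and> pp (branch_sizes n ls) = ls"
proof -
  have ne: "ls \<noteq> []" and h: "hd ls \<in> minimal_elems (LL n)"
    and st: "\<And>k. 0 < k \<Longrightarrow> k < length ls \<Longrightarrow> ls ! k \<in> minimal_elems (proper_multiples (LL n) (ls ! (k - 1)))"
    and la: "proper_multiples (LL n) (last ls) = {}"
    using br unfolding is_branch_def by auto
  define m where "m = length ls"
  have m0: "0 < m" using ne m_def by simp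
  have h0: "ls!0 = hd ls" using ne by (simp add: hd_conv_nth)
  have inL: "ls!k \<in> LL n" if "k < m" for k
  proof (cases "k = 0")
    case True
    then show ?thesis using h h0 minimal_sub by simp
  next
    case False
    then have "ls ! k \<in> proper_multiples (LL n) (ls ! (k - 1))" using st[of k] that m_def minimal_sub by blast
    then show ?thesis unfolding proper_multiples_def by simp
  qed
  have pos: "0 < ls!k" if "k < m" for k using inL[OF that] by (simp add: LL_def)
  have hp: "prime (ls!0)"
    using h h0 LL_min min_mult[of 1 n "ls!0"] n0 by auto
  have stp: "\<exists>p. prime p \<and> ls!k = ls!(k-1) * p" if "0 < k" "k < m" for k
  proof -
    have "ls ! k \<in> minimal_elems {x\<in>LL n. ls!(k-1) dvd x \<and> x \<noteq> ls!(k-1)}"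
      using st[of k] that m_def unfolding proper_multiples_def by simp
    then show ?thesis using min_mult[of "ls!(k-1)" n "ls!k"] pos[of "k-1"] that n0 by auto
  qed
  have dv: "ls!(k-1) dvd ls!k" if "0 < k" "k < length ls" for k
    using stp[of k] that m_def by auto
  have lastL: "last ls \<in> LL n" using inL[of "m-1"] m0 ne m_def by (simp add: last_conv_nth)
  have lp: "prime (n div last ls)" using last_empty[OF lastL] la by simp
  define bs where "bs = branch_sizes n ls"
  have bl: "length bs = Suc m" using bs_length[OF ne] bs_def m_def by simp
  have bn: "bs ! i = (if i = 0 then ls!0 else if i < m then ls!i div ls!(i-1) else n div last ls)" if "i \<le> m" for i
    using bs_nth[OF ne, of i n] that bs_def m_def by simp
  have bpr: "prime (bs!i)" if iS: "i < Suc m" for i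
  proof -
    consider "i = 0" | "0 < i" "i < m" | "i = m" using iS by (metis less_antisym neq0_conv)
    then show ?thesis
    proof cases
      case 1 then show ?thesis using bn[of i] hp by simp
    next
      case 2
      then obtain p where p: "prime p" "ls!i = ls!(i-1) * p" using stp by blast
      have "ls!i div ls!(i-1) = p" using p(2) pos[of "i-1"] 2 by simp
      then show ?thesis using bn[of i] 2 p(1) by simp
    next
      case 3 then show ?thesis using bn[of i] lp m0 by simp
    qed
  qed
  have pre: "prod_list (take (Suc k) bs) = ls!k" if "k < m" for k
    using bs_prefix[OF ne dv, of k n] that bs_def m_def by simp
  have beq: "bs = take m bs @ [bs ! m]"
    using bl by (metis lessI take_Suc_conv_app_nth take_all order_refl)
  have "prod_list (take m bs @ [bs ! m]) = prod_list (take m bs) * bs ! m" by simp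
  then have "prod_list bs = prod_list (take m bs) * bs ! m"
    using beq by metis
  also have "prod_list (take m bs) = last ls"
    using pre[of "m-1"] m0 ne m_def by (simp add: last_conv_nth)
  also have "bs ! m = n div last ls" using bn[of m] m0 by simp
  also have "last ls * (n div last ls) = n" using lastL by (simp add: LL_def)
  finally have prodn: "prod_list bs = n" .
  have "prime_factorization (prod_mset (mset bs)) = mset bs"
    by (rule prime_factorization_prod_mset_primes) (use bpr bl in \<open>auto simp: in_set_conv_nth\<close>)
  then have mb: "mset bs = prime_factorization n" using prodn by (simp add: prod_mset_prod_list)
  have "pp bs = ls"
  proof (rule nth_equalityI)
    show "length (pp bs) = length ls" using bl m_def m0 by (auto simp: pp_def Suc_le_eq)
  next
    fix k assume "k < length (pp bs)"
    then have k: "k < m" using bl by (simp add: pp_def del: upt_Suc)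
    then have "pp bs ! k = prod_list (take (Suc k) bs)" using bl by (simp add: pp_def del: upt_Suc)
    then show "pp bs ! k = ls ! k" using pre[OF k] by simp
  qed
  then show ?thesis using mb bs_def by simp
qed


lemma prod_pos: "(\<forall>x\<in>set xs. (0::nat) < x) \<Longrightarrow> 0 < prod_list xs"
  by (induction xs) auto

lemma branch_b:
  assumes n1: "1 < n" and np: "\<not> prime n" and ms: "mset ps = prime_factorization n"
  shows "is_branch (LL n) (pp ps) \<and> branch_sizes n (pp ps) = ps"
proof -
  have n0: "0 < n" using n1 by simp
  have prs: "prime x" if "x \<in> set ps" for x
  proof -
    have "x \<in># mset ps" using that by simp
    then show ?thesis using ms by auto
  qed
  have prn: "prod_list ps = n" using ms n0 by (metis prod_mset_prod_list prod_mset_prime_factorization_nat)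
  define m where "m = length ps"
  have prsi: "prime (ps!i)" if "i < m" for i using prs that m_def by simp
  have m2: "2 \<le> m"
  proof -
    have "m \<noteq> 0" using prn n1 m_def by auto
    moreover have "m \<noteq> 1"
    proof
      assume "m = 1"
      then obtain p where "ps = [p]" using m_def by (cases ps) auto
      then show False using prn np prs by auto
    qed
    ultimately show ?thesis by linarith
  qed
  define P where "P j = prod_list (take j ps)" for j
  have PS: "P (Suc j) = P j * ps!j" if "j < m" for j
    using that m_def by (simp add: P_def take_Suc_conv_app_nth)
  have Ppos: "0 < P j" for j
  proof -
    have "\<forall>x\<in>set (take j ps). 0 < x" using prs by (auto dest: in_set_takeD prime_gt_0_nat)
    then show ?thesis unfolding P_def by (rule prod_pos)
  qed
  have Pdvd: "P j dvd n" for j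
  proof -
    have "n = prod_list (take j ps) * prod_list (drop j ps)"
      using prn by (metis append_take_drop_id prod_list.append)
    then show ?thesis unfolding P_def by (metis dvd_triv_left)
  qed
  have Pless: "P j < n" if "j < m" for j
  proof -
    have drp: "drop j ps = ps!j # drop (Suc j) ps" using that m_def by (simp add: Cons_nth_drop_Suc)
    have "\<forall>x\<in>set (drop (Suc j) ps). 0 < x" using prs by (auto dest: in_set_dropD prime_gt_0_nat)
    then have "0 < prod_list (drop (Suc j) ps)" by (rule prod_pos)
    then have "ps!j \<le> prod_list (drop j ps)" using drp by simp
    moreover have "1 < ps!j" using prsi[OF that] prime_gt_1_nat by blast
    ultimately have d1: "1 < prod_list (drop j ps)" by linarith
    have "n = P j * prod_list (drop j ps)"
      using prn unfolding P_def by (metis append_take_drop_id prod_list.append)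
    moreover have "P j < P j * prod_list (drop j ps)" using d1 Ppos[of j] by simp
    ultimately show ?thesis by simp
  qed
  have Pgt: "1 < P j" if jj: "0 < j" "j \<le> m" for j
  proof -
    obtain i where i: "j = Suc i" using jj(1) by (cases j) auto
    have "P j = P i * ps!i" using PS[of i] i jj by simp
    moreover have "ps!i \<le> P i * ps!i" using Ppos[of i] by simp
    moreover have "1 < ps!i" using prsi[of i] i jj prime_gt_1_nat by simp
    ultimately show ?thesis by linarith
  qed
  have PL: "P j \<in> LL n" if "0 < j" "j < m" for j
    using Pgt[of j] Pless[of j] Pdvd[of j] that unfolding LL_def by simp
  define ls where "ls = pp ps"
  have ll: "length ls = m - 1" unfolding ls_def pp_def m_def by (simp del: upt_Suc)
  have lnth: "ls!k = P (Suc k)" if "k < m - 1" for k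
    using that unfolding ls_def pp_def P_def m_def by (simp del: upt_Suc)
  have ne: "ls \<noteq> []" using ll m2 by auto
  have l0: "ls!0 = ps!0" using lnth[of 0] m2 PS[of 0] by (simp add: P_def)
  have hd: "hd ls \<in> minimal_elems (LL n)"
  proof -
    have "ls!0 \<in> minimal_elems {x\<in>LL n. 1 dvd x \<and> x \<noteq> 1}"
      using min_mult[of 1 n "ls!0"] n0 prsi[of 0] m2 l0 PL[of 1] lnth[of 0] by auto
    then show ?thesis using LL_min ne by (simp add: hd_conv_nth)
  qed
  have stp: "ls ! k \<in> minimal_elems (proper_multiples (LL n) (ls ! (k - 1)))"
    if "0 < k" "k < length ls" for k
  proof -
    have e1: "ls!k = P (Suc k)" "ls!(k-1) = P k" using lnth[of k] lnth[of "k-1"] that ll by auto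
    have "P (Suc k) = P k * ps!k" using PS[of k] that ll by simp
    moreover have "P (Suc k) \<in> LL n" using PL[of "Suc k"] that ll by simp
    moreover have "prime (ps!k)" using prsi[of k] that ll by simp
    ultimately have "P (Suc k) \<in> minimal_elems {x\<in>LL n. P k dvd x \<and> x \<noteq> P k}"
      using min_mult[of "P k" n "P (Suc k)"] Ppos[of k] n0 by blast
    then show ?thesis using e1 unfolding proper_multiples_def by simp
  qed
  have lastP: "last ls = P (m - 1)"
    using ne ll lnth[of "m-2"] m2 by (simp add: last_conv_nth Suc_diff_Suc numeral_2_eq_2)
  have nP: "n = P (m-1) * ps!(m-1)"
    using PS[of "m-1"] m2 prn unfolding P_def m_def by simp
  have ndiv: "n div last ls = ps!(m-1)" using nP lastP Ppos[of "m-1"] by simp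
  have lastL: "last ls \<in> LL n" using lastP PL[of "m-1"] m2 by simp
  have la: "proper_multiples (LL n) (last ls) = {}"
    using last_empty[OF lastL] ndiv prsi[of "m-1"] m2 by simp
  have isb: "is_branch (LL n) ls" unfolding is_branch_def using ne hd stp la by blast
  have "branch_sizes n ls = ps"
  proof (rule nth_equalityI)
    show "length (branch_sizes n ls) = length ps" using bs_length[OF ne] ll m2 m_def by simp
  next
    fix i assume "i < length (branch_sizes n ls)"
    then have i: "i < m" using bs_length[OF ne] ll m2 by simp
    have bn: "branch_sizes n ls ! i = (if i = 0 then ls!0 else if i < m - 1 then ls!i div ls!(i-1) else n div last ls)"
      using bs_nth[OF ne, of i n] i ll by simp
    consider "i = 0" | "0 < i" "i < m - 1" | "i = m - 1" using i by linarith
    then show "branch_sizes n ls ! i = ps ! i"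
    proof cases
      case 1 then show ?thesis using bn l0 by simp
    next
      case 2
      have "ls!i = P i * ps!i" "ls!(i-1) = P i" using lnth[of i] lnth[of "i-1"] PS[of i] 2 by auto
      then show ?thesis using bn 2 Ppos[of i] by simp
    next
      case 3 then show ?thesis using bn ndiv m2 by simp
    qed
  qed
  then show ?thesis using isb ls_def by simp
qed


lemma maximal_facts:
  assumes "maximal n A"
  shows "1 < n" "\<not> prime n" "factor_set n A = LL n"
proof -
  obtain ns where ns: "length ns > 1" "\<forall>k\<in>set ns. k > 1" "prod_list ns = n"
    using assms unfolding maximal_def decomposable_def has_factorization_def by blast
  obtain a rest where ar: "ns = a # rest" using ns(1) by (cases ns) auto
  have rne: "rest \<noteq> []" using ns(1) ar by auto
  have a1: "1 < a" using ns(2) ar by simp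
  have b1: "1 < prod_list rest" using prod_gt1[of rest] ns(2) ar rne by simp
  have nab: "n = a * prod_list rest" using ns(3) ar by simp
  show n1: "1 < n"
  proof -
    have "a \<le> a * prod_list rest" using b1 by simp
    then show ?thesis using a1 nab by linarith
  qed
  show "\<not> prime n"
  proof
    assume "prime n"
    then have "a = 1 \<or> prod_list rest = 1" using prime_product nab by blast
    then show False using a1 b1 by auto
  qed
  show "factor_set n A = LL n"
  proof
    show "factor_set n A \<subseteq> LL n"
    proof
      fix x assume "x \<in> factor_set n A"
      then obtain n2 where c: "compatible_pair n x n2" unfolding factor_set_def by blast
      then have "x dvd n" "x \<noteq> 1" "x \<noteq> n" "0 < x" unfolding compatible_pair_def by auto
      moreover have "x \<le> n" using \<open>x dvd n\<close> n1 by (simp add: dvd_imp_le)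
      ultimately show "x \<in> LL n" unfolding LL_def by auto
    qed
  next
    show "LL n \<subseteq> factor_set n A"
    proof
      fix x assume x: "x \<in> LL n"
      then obtain q where q: "n = x * q" unfolding LL_def by (auto elim: dvdE)
      have "q \<noteq> 0"
      proof
        assume "q = 0" then show False using q n1 by simp
      qed
      moreover have "q \<noteq> 1" using q x by (auto simp: LL_def)
      moreover have "q \<noteq> n" using q x n1 by (auto simp: LL_def)
      moreover have "q dvd n" using q by simp
      ultimately have "compatible_pair n x q" using x q unfolding compatible_pair_def LL_def by auto
      then have "has_factorization n A [x, q]" using assms unfolding maximal_def by blast
      then show "x \<in> factor_set n A" unfolding factor_set_def using \<open>compatible_pair n x q\<close> by blast
    qed
  qed
qed

theorem theorem1:
  fixes n :: nat and A :: bmat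
  assumes "maximal n A"
  shows "(\<forall>ls. is_branch (factor_set n A) ls \<longrightarrow>
           (\<forall>x\<in>set (branch_sizes n ls). x \<in> prime_factors n) \<and>
           length (branch_sizes n ls) = (\<Sum>p\<in>prime_factors n. multiplicity p n)) \<and>
         card {ls. is_branch (factor_set n A) ls} =
           fact (\<Sum>p\<in>prime_factors n. multiplicity p n) div (\<Prod>p\<in>prime_factors n. fact (multiplicity p n))"
proof -
  note mf = maximal_facts[OF assms]
  have n0: "0 < n" using mf(1) by simp
  have sz: "size (prime_factorization n) = (\<Sum>p\<in>prime_factors n. multiplicity p n)"
    by (simp add: size_multiset_overloaded_eq count_prime_factorization_prime in_prime_factors_imp_prime)
  have pr: "(\<Prod>p\<in>prime_factors n. fact (count (prime_factorization n) p) :: nat) = (\<Prod>p\<in>prime_factors n. fact (multiplicity p n))"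
    by (rule prod.cong) (auto simp: count_prime_factorization_prime in_prime_factors_imp_prime)
  have part1: "\<forall>ls. is_branch (factor_set n A) ls \<longrightarrow>
           (\<forall>x\<in>set (branch_sizes n ls). x \<in> prime_factors n) \<and>
           length (branch_sizes n ls) = (\<Sum>p\<in>prime_factors n. multiplicity p n)"
  proof (intro allI impI)
    fix ls assume "is_branch (factor_set n A) ls"
    then have "mset (branch_sizes n ls) = prime_factorization n"
      using branch_a[OF n0] mf(3) by simp
    then have "set (branch_sizes n ls) = prime_factors n" "length (branch_sizes n ls) = size (prime_factorization n)"
      by (metis set_mset_mset, metis size_mset)
    then show "(\<forall>x\<in>set (branch_sizes n ls). x \<in> prime_factors n) \<and>
           length (branch_sizes n ls) = (\<Sum>p\<in>prime_factors n. multiplicity p n)" using sz by simp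
  qed
  have bij: "bij_betw (branch_sizes n) {ls. is_branch (LL n) ls} (permutations_of_multiset (prime_factorization n))"
  proof (rule bij_betw_byWitness[where f' = pp])
    show "\<forall>a\<in>{ls. is_branch (LL n) ls}. pp (branch_sizes n a) = a" using branch_a[OF n0] by simp
    show "\<forall>a'\<in>permutations_of_multiset (prime_factorization n). branch_sizes n (pp a') = a'"
      using branch_b[OF mf(1) mf(2)] by (simp add: permutations_of_multiset_def)
    show "branch_sizes n ` {ls. is_branch (LL n) ls} \<subseteq> permutations_of_multiset (prime_factorization n)"
      using branch_a[OF n0] by (auto simp: permutations_of_multiset_def)
    show "pp ` permutations_of_multiset (prime_factorization n) \<subseteq> {ls. is_branch (LL n) ls}"
      using branch_b[OF mf(1) mf(2)] by (auto simp: permutations_of_multiset_def)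
  qed
  have "card {ls. is_branch (factor_set n A) ls} = card (permutations_of_multiset (prime_factorization n))"
    using bij_betw_same_card[OF bij] mf(3) by simp
  also have "\<dots> = fact (\<Sum>p\<in>prime_factors n. multiplicity p n) div (\<Prod>p\<in>prime_factors n. fact (multiplicity p n))"
    using card_permutations_of_multiset(1)[of "prime_factorization n"] sz pr by simp
  finally show ?thesis using part1 by simp
qed

end
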